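(* Let $n$ be a positive integer and $g=3n+1$. The map $\sigma$ sends $\mathcal{G}_{2n}(g,q\le3)$ into $\mathcal{C}_{2n+1}(g+1)$ and is injective on $\mathcal{G}_{2n}(g,q\le 3)$. Moreover: (i) if $G\in\mathcal{G}_{2n}(g)$ has depth $2$ and multiplicity $m$, then $\sigma(G)$ is an $(m+1)$-set of depth $2$; (ii) if $G\in\mathcal{G}_{2n}(g)$ has depth $3$ and multiplicity $m$, then $\sigma(G)$ is an $(m+1)$-set of depth $3$.
   Context: A gapset is a finite set $G\subset\mathbb{N}=\{1,2,\dots\}$ such that whenever $z\in G$ and $z=x+y$ with $x,y\in\mathbb{N}$, then $x\in G$ or $y\in G$; its genus is $\#G$. Write $G=\{\ell_1<\dots<\ell_g\}$. Multiplicity $m(G)=\min\{s\in\mathbb{N}:s\notin G\}$; conductor $c(G)=\min\{s\in\mathbb{N}: s+t\notin G\ \forall t\in\mathbb{N}_0\}$; depth $q(G)=\lceil c(G)/m(G)\rceil$. $G$ is pure $\kappa$-sparse if $\ell_{i+1}-\ell_i\le\kappa$ for all $i$ with equality for some $i$; $\mathcal{G}_\kappa(g)$ is the set of pure $\kappa$-sparse gapsets of genus $g$ and $\mathcal{G}_\kappa(g,q\le3)$ those of depth at most $3$. $\mathcal{C}_\kappa(g)$ is the set of subsets of $[1,2g-1]$ with exactly $g$ elements whose maximum difference between consecutive elements (in increasing order) is exactly $\kappa$. For a positive integer $m$, an $m$-set is a set $M\subset\mathbb{N}$ with $[1,m-1]\subseteq M$ and $M\cap m\mathbb{N}=\emptyset$;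 its depth is $\lceil c/m\rceil$ where $c=\max M$. For $G\in\mathcal{G}_{2n}(g)$ let $\alpha=\max\{i:\ell_{i+1}-\ell_i=2n\}$ and $\sigma(G)=\{1\}\cup\{\ell_i+1:1\le i\le\alpha\}\cup\{\ell_i+2:\alpha+1\le i\le g\}$. *)

theory Defs
  imports Main
begin

definition gapset :: "nat set \<Rightarrow> bool" where
  "gapset G \<longleftrightarrow> finite G \<and> 0 \<notin> G \<and>
     (\<forall>z\<in>G. \<forall>x y. 1 \<le> x \<longrightarrow> 1 \<le> y \<longrightarrow> z = x + y \<longrightarrow> x \<in> G \<or> y \<in> G)"

text \<open>The i-th smallest element (1-indexed) of a finite set: ell S i = l_i.\<close>
definition ell :: "nat set \<Rightarrow> nat \<Rightarrow> nat" where
  "ell S i = sorted_list_of_set S ! (i - 1)"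

definition max_consec_diff_eq :: "nat \<Rightarrow> nat set \<Rightarrow> bool" where
  "max_consec_diff_eq \<kappa> S \<longleftrightarrow>
     (\<forall>i. 1 \<le> i \<and> i < card S \<longrightarrow> ell S (i+1) - ell S i \<le> \<kappa>) \<and>
     (\<exists>i. 1 \<le> i \<and> i < card S \<and> ell S (i+1) - ell S i = \<kappa>)"

definition pure_sparse :: "nat \<Rightarrow> nat set \<Rightarrow> bool" where
  "pure_sparse \<kappa> G \<longleftrightarrow> max_consec_diff_eq \<kappa> G"

definition multiplicity :: "nat set \<Rightarrow> nat" where
  "multiplicity G = (LEAST s. 1 \<le> s \<and> s \<notin> G)"

definition conductor :: "nat set \<Rightarrow> nat" where
  "conductor G = (LEAST s. 1 \<le> s \<and> (\<forall>t. s + t \<notin> G))"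

definition ceil_div :: "nat \<Rightarrow> nat \<Rightarrow> nat" where
  "ceil_div c m = (c + m - 1) div m"

definition depth :: "nat set \<Rightarrow> nat" where
  "depth G = ceil_div (conductor G) (multiplicity G)"

definition sparse_gapsets :: "nat \<Rightarrow> nat \<Rightarrow> nat set set" where
  "sparse_gapsets \<kappa> g = {G. gapset G \<and> card G = g \<and> pure_sparse \<kappa> G}"

definition sparse_gapsets_depth_le3 :: "nat \<Rightarrow> nat \<Rightarrow> nat set set" where
  "sparse_gapsets_depth_le3 \<kappa> g = {G \<in> sparse_gapsets \<kappa> g. depth G \<le> 3}"

definition Cset :: "nat \<Rightarrow> nat \<Rightarrow> nat set set" where
  "Cset \<kappa> g = {S. S \<subseteq> {1..2*g-1} \<and> card S = g \<and> max_consec_diff_eq \<kappa> S}"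

definition m_set :: "nat \<Rightarrow> nat set \<Rightarrow> bool" where
  "m_set m M \<longleftrightarrow> 0 \<notin> M \<and> {1..m-1} \<subseteq> M \<and> (\<forall>k\<ge>1. m * k \<notin> M)"

definition m_set_depth :: "nat \<Rightarrow> nat set \<Rightarrow> nat" where
  "m_set_depth m M = ceil_div (Max M) m"

definition sigma_alpha :: "nat \<Rightarrow> nat set \<Rightarrow> nat" where
  "sigma_alpha n G = Max {i. 1 \<le> i \<and> i < card G \<and> ell G (i+1) - ell G i = 2*n}"

definition sigma :: "nat \<Rightarrow> nat set \<Rightarrow> nat set" where
  "sigma n G = {1} \<union> {ell G i + 1 | i. 1 \<le> i \<and> i \<le> sigma_alpha n G}
                    \<union> {ell G i + 2 | i. sigma_alpha n G + 1 \<le> i \<and> i \<le> card G}"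

end

theory Submission
  imports Defs
begin

definition smono :: "nat \<Rightarrow> (nat \<Rightarrow> nat) \<Rightarrow> bool" where
  "smono N f \<longleftrightarrow> (\<forall>i j. 1 \<le> i \<longrightarrow> i < j \<longrightarrow> j \<le> N \<longrightarrow> f i < f j)"

lemma ell_props:
  assumes "finite S"
  shows "smono (card S) (ell S)" "ell S ` {1..card S} = S"
proof -
  let ?xs = "sorted_list_of_set S"
  have len: "length ?xs = card S" by simp
  have sw: "sorted_wrt (<) ?xs" by simp
  show "smono (card S) (ell S)"
    unfolding smono_def ell_def
  proof (intro allI impI)
    fix i j :: nat assume "1 \<le> i" "i < j" "j \<le> card S"
    then show "?xs ! (i - 1) < ?xs ! (j - 1)"
      using sorted_wrt_nth_less[OF sw, of "i-1" "j-1"] len by simp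
  qed
  show "ell S ` {1..card S} = S"
  proof -
    have "ell S ` {1..card S} = (\<lambda>k. ?xs ! k) ` {0..<length ?xs}"
      unfolding ell_def len
      apply (rule set_eqI) apply (auto simp: image_iff)
      subgoal for x by (rule bexI[of _ "x - Suc 0"]) auto
      subgoal for xa by (rule bexI[of _ "Suc xa"]) auto
      done
    also have "\<dots> = set ?xs" by (auto simp: in_set_conv_nth)
    finally show ?thesis using assms by simp
  qed
qed

lemma ell_unique:
  assumes "finite S" "smono N f" "f ` {1..N} = S"
  shows "card S = N" "\<And>i. 1 \<le> i \<Longrightarrow> i \<le> N \<Longrightarrow> ell S i = f i"
proof -
  define xs where "xs = map (\<lambda>k. f (Suc k)) [0..<N]"
  have sw: "sorted_wrt (<) xs"
    unfolding sorted_wrt_iff_nth_less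
  proof (intro allI impI)
    fix i j assume h: "i < j" "j < length xs"
    then have "f (Suc i) < f (Suc j)" using assms(2) unfolding smono_def xs_def by simp
    then show "xs ! i < xs ! j" using h by (simp add: xs_def)
  qed
  have dist: "distinct xs" using sw by (simp add: strict_sorted_iff)
  have st: "set xs = S"
  proof -
    have "set xs = (\<lambda>k. f (Suc k)) ` {0..<N}" by (simp add: xs_def)
    also have "\<dots> = f ` (Suc ` {0..<N})" by (simp only: image_image)
    also have "Suc ` {0..<N} = {1..N}" by (simp add: image_Suc_atLeastLessThan atLeastLessThanSuc_atLeastAtMost)
    finally show ?thesis using assms(3) by simp
  qed
  have cl: "card S = N" using distinct_card[OF dist] st by (simp add: xs_def)
  then show "card S = N" .
  have lx: "length xs = card S" using cl by (simp add: xs_def)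
  have eq: "sorted_list_of_set S = xs"
    using sorted_list_of_set_unique[OF assms(1), of xs] sw st lx by blast
  show "\<And>i. 1 \<le> i \<Longrightarrow> i \<le> N \<Longrightarrow> ell S i = f i"
  proof -
    fix i assume i: "1 \<le> i" "i \<le> N"
    then have "i - 1 < N" by simp
    then have "xs ! (i-1) = f (Suc (i-1))" by (simp add: xs_def)
    then show "ell S i = f i" using eq i by (simp add: ell_def)
  qed
qed

lemma gs_pair:
  assumes "gapset G" "z \<in> G" "1 \<le> x" "x < z"
  shows "x \<in> G \<or> z - x \<in> G"
proof -
  have "\<forall>x y. 1 \<le> x \<longrightarrow> 1 \<le> y \<longrightarrow> z = x + y \<longrightarrow> x \<in> G \<or> y \<in> G"
    using assms(1,2) unfolding gapset_def by blast
  from this[rule_format, of x "z - x"] show ?thesis using assms(3,4) by simp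
qed

lemma gs_one:
  assumes "gapset G" "G \<noteq> {}"
  shows "1 \<in> G"
proof (rule ccontr)
  assume n1: "1 \<notin> G"
  have fin: "finite G" "0 \<notin> G" using assms(1) by (auto simp: gapset_def)
  define z where "z = Min G"
  have zG: "z \<in> G" using fin assms(2) by (simp add: z_def)
  have z2: "z \<ge> 2" proof -
    have "z \<noteq> 0"
    proof
      assume "z = 0" then show False using zG fin by simp
    qed
    moreover have "z \<noteq> 1" using zG n1 by auto
    ultimately
    show ?thesis by linarith
  qed
  have "1 \<in> G \<or> z - 1 \<in> G" using gs_pair[OF assms(1) zG, of 1] z2 by simp
  moreover have "z - 1 \<notin> G" using fin z2 unfolding z_def
    by (metis Min_le diff_less not_le zero_less_one z_def le_less_trans not_one_le_zero less_le_trans one_le_numeral)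
  ultimately show False using n1 by simp
qed

lemma pair_count:
  assumes fin: "finite G" and P: "\<And>u. 1 \<le> u \<Longrightarrow> u < k \<Longrightarrow> c+u \<in> G \<or> c+k-u \<in> G"
  shows "k div 2 \<le> card (G \<inter> {c+1..<c+k})"
proof -
  define f where "f u = (if c+u \<in> G then c+u else c+k-u)" for u
  have inj: "inj_on f {1..k div 2}"
  proof (rule inj_onI)
    fix u v assume u: "u \<in> {1..k div 2}" and v: "v \<in> {1..k div 2}" and e: "f u = f v"
    have "u \<le> k div 2" "v \<le> k div 2" using u v by auto
    then have uk: "u + v \<le> k" "u \<le> k" "v \<le> k" by linarith+
    show "u = v"
    proof (cases "c+u \<in> G"; cases "c+v \<in> G")
      assume "c+u \<in> G" "c+v \<in> G" then show ?thesis using e by (simp add: f_def)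
    next
      assume "c+u \<notin> G" "c+v \<notin> G" then show ?thesis using e uk by (simp add: f_def)
    next
      assume a: "c+u \<in> G" "c+v \<notin> G"
      then have "c+u = c+k-v" using e by (simp add: f_def)
      then have "u + v = k" using uk by simp
      then show ?thesis using \<open>u \<le> k div 2\<close> \<open>v \<le> k div 2\<close> by linarith
    next
      assume a: "c+u \<notin> G" "c+v \<in> G"
      then have "c+k-u = c+v" using e by (simp add: f_def)
      then have "u + v = k" using uk by simp
      then show ?thesis using \<open>u \<le> k div 2\<close> \<open>v \<le> k div 2\<close> by linarith
    qed
  qed
  have img: "f ` {1..k div 2} \<subseteq> G \<inter> {c+1..<c+k}"
  proof
    fix y assume "y \<in> f ` {1..k div 2}"
    then obtain u where u: "1 \<le> u" "u \<le> k div 2" "y = f u" by auto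
    then have uk: "u < k" by linarith
    show "y \<in> G \<inter> {c+1..<c+k}" using P[OF u(1) uk] u uk unfolding f_def by auto
  qed
  have "card {1..k div 2} \<le> card (G \<inter> {c+1..<c+k})"
    by (rule card_inj_on_le[OF inj img]) (use fin in auto)
  then show ?thesis by simp
qed

lemma gs_max_bound:
  assumes "gapset G" "z \<in> G"
  shows "z \<le> 2 * card G - 1"
proof -
  have fin: "finite G" using assms(1) by (simp add: gapset_def)
  have "z div 2 \<le> card (G \<inter> {0+1..<0+z})"
    by (rule pair_count[OF fin]) (use gs_pair[OF assms] in auto)
  moreover have "card (G \<inter> {0+1..<0+z}) < card G"
    by (rule psubset_card_mono[OF fin]) (use assms(2) in auto)
  ultimately show ?thesis by linarith
qed

lemma mult_props:
  assumes "finite G"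
  shows "1 \<le> multiplicity G" "multiplicity G \<notin> G" "\<And>x. 1 \<le> x \<Longrightarrow> x < multiplicity G \<Longrightarrow> x \<in> G"
proof -
  obtain b where b: "\<forall>x\<in>G. x < b" using assms finite_nat_set_iff_bounded by auto
  have ex: "1 \<le> Suc b \<and> Suc b \<notin> G" using b by auto
  have "1 \<le> multiplicity G \<and> multiplicity G \<notin> G"
    unfolding multiplicity_def by (rule LeastI[of _ "Suc b"]) (use ex in auto)
  then show "1 \<le> multiplicity G" "multiplicity G \<notin> G" by auto
  show "\<And>x. 1 \<le> x \<Longrightarrow> x < multiplicity G \<Longrightarrow> x \<in> G"
    unfolding multiplicity_def using not_less_Least by blast
qed

lemma conductor_eq:
  assumes "finite G" "G \<noteq> {}"
  shows "conductor G = Max G + 1"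
  unfolding conductor_def
proof (rule Least_equality)
  show "1 \<le> Max G + 1 \<and> (\<forall>t. Max G + 1 + t \<notin> G)"
    using Max_ge[OF assms(1)] by (auto, fastforce)
next
  fix y assume y: "1 \<le> y \<and> (\<forall>t. y + t \<notin> G)"
  show "Max G + 1 \<le> y"
  proof (rule ccontr)
    assume "\<not> Max G + 1 \<le> y"
    then have "y + (Max G - y) = Max G" by simp
    then show False using y Max_in[OF assms] by metis
  qed
qed

lemma smono_le:
  assumes "smono N f" "1 \<le> i" "i \<le> j" "j \<le> N"
  shows "f i \<le> f j"
proof (cases "i = j")
  case False
  then have "i < j" using assms by simp
  then show ?thesis using assms unfolding smono_def by (simp add: less_imp_le)
qed simp

lemma smono_suc:
  assumes "\<And>i. 1 \<le> i \<Longrightarrow> i < N \<Longrightarrow> f i < f (Suc i)"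
  shows "smono N f"
  unfolding smono_def
proof (intro allI impI)
  fix i j assume h: "1 \<le> i" "i < j" "j \<le> N"
  then show "f i < f j"
  proof (induction j)
    case 0 then show ?case by simp
  next
    case (Suc j)
    show ?case
    proof (cases "i = j")
      case True then show ?thesis using assms Suc.prems by simp
    next
      case False
      then have "f i < f j" using Suc by simp
      also have "f j < f (Suc j)" using assms Suc.prems False by simp
      finally show ?thesis .
    qed
  qed
qed

definition sfun :: "nat \<Rightarrow> nat set \<Rightarrow> nat \<Rightarrow> nat" where
  "sfun n G i = (if i = 1 then 1 else if i \<le> sigma_alpha n G + 1 then ell G (i-1) + 1 else ell G (i-1) + 2)"

locale SG =
  fixes n :: nat and G :: "nat set"
  assumes npos: "0 < n" and gs: "gapset G" and cardG: "card G = 3*n+1" and ps: "pure_sparse (2*n) G"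
begin

abbreviation "L \<equiv> ell G"
abbreviation "g \<equiv> card G"
abbreviation "\<alpha> \<equiv> sigma_alpha n G"
abbreviation "s \<equiv> sfun n G"

lemma fin: "finite G" using gs by (simp add: gapset_def)
lemma Gne: "G \<noteq> {}" using cardG by auto
lemma zero_notin: "0 \<notin> G" using gs by (simp add: gapset_def)

lemma L_strict: "1 \<le> i \<Longrightarrow> i < j \<Longrightarrow> j \<le> g \<Longrightarrow> L i < L j"
  using ell_props(1)[OF fin] unfolding smono_def by blast
lemma L_img: "L ` {1..g} = G" using ell_props(2)[OF fin] .
lemma L_in: "1 \<le> i \<Longrightarrow> i \<le> g \<Longrightarrow> L i \<in> G" using L_img by auto
lemma L_le: "1 \<le> i \<Longrightarrow> i \<le> j \<Longrightarrow> j \<le> g \<Longrightarrow> L i \<le> L j"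
  using L_strict by (cases "i = j") (auto simp: less_imp_le)
lemma in_L: "x \<in> G \<Longrightarrow> \<exists>j. 1 \<le> j \<and> j \<le> g \<and> L j = x"
  using L_img by force

lemma diffs_le: "1 \<le> i \<Longrightarrow> i < g \<Longrightarrow> L (i+1) - L i \<le> 2*n"
  using ps unfolding pure_sparse_def max_consec_diff_eq_def by blast

definition "Aset = {i. 1 \<le> i \<and> i < g \<and> L (i+1) - L i = 2*n}"
lemma alpha_def': "\<alpha> = Max Aset" unfolding sigma_alpha_def Aset_def ..
lemma Aset_fin: "finite Aset" unfolding Aset_def by auto
lemma Aset_ne: "Aset \<noteq> {}" using ps unfolding pure_sparse_def max_consec_diff_eq_def Aset_def by blast
lemma alpha_in: "\<alpha> \<in> Aset" unfolding alpha_def' using Max_in[OF Aset_fin Aset_ne] .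
lemma alpha_ge1: "1 \<le> \<alpha>" and alpha_lt: "\<alpha> < g" and alpha_gap: "L (\<alpha>+1) - L \<alpha> = 2*n"
  using alpha_in unfolding Aset_def by auto
lemma alpha_gap': "L (\<alpha>+1) = L \<alpha> + 2*n"
  using alpha_gap L_strict[OF alpha_ge1, of "\<alpha>+1"] alpha_lt by simp
lemma alpha_max: "1 \<le> i \<Longrightarrow> i < g \<Longrightarrow> L (i+1) - L i = 2*n \<Longrightarrow> i \<le> \<alpha>"
  unfolding alpha_def' using Max_ge[OF Aset_fin] unfolding Aset_def by auto
lemma diffs_lt: "\<alpha> < i \<Longrightarrow> i < g \<Longrightarrow> L (i+1) - L i < 2*n"
  using diffs_le alpha_max alpha_ge1 by (meson le_less_trans less_imp_le_nat not_le order_le_less)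

lemma one_in: "1 \<in> G" using gs_one[OF gs Gne] .
lemma L1: "L 1 = 1"
proof -
  obtain j where j: "1 \<le> j" "j \<le> g" "L j = 1" using in_L[OF one_in] by blast
  have "L 1 \<le> 1" using L_le[of 1 j] j by simp
  moreover have "L 1 \<noteq> 0"
  proof -
    have "1 \<le> g" using j by simp
    then have "L 1 \<in> G" using L_in[of 1] by simp
    then show ?thesis using zero_notin by metis
  qed
  ultimately show ?thesis by simp
qed

lemma s_step: "1 \<le> i \<Longrightarrow> i < g+1 \<Longrightarrow> s i < s (Suc i)"
proof -
  assume i: "1 \<le> i" "i < g+1"
  consider "i = 1" | "2 \<le> i" "i \<le> \<alpha>" | "i = \<alpha>+1" | "\<alpha>+2 \<le> i" using i by linarith
  then show "s i < s (Suc i)"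
  proof cases
    case 1 then show ?thesis using alpha_ge1 L1 by (simp add: sfun_def)
  next
    case 2 then show ?thesis using L_strict[of "i-1" i] alpha_lt i by (simp add: sfun_def)
  next
    case 3 then show ?thesis using alpha_gap' alpha_ge1 by (simp add: sfun_def)
  next
    case 4 then show ?thesis using L_strict[of "i-1" i] alpha_lt i by (simp add: sfun_def)
  qed
qed

lemma s_smono: "smono (g+1) s" by (rule smono_suc) (use s_step in auto)

lemma s_img: "s ` {1..g+1} = sigma n G"
proof (rule set_eqI)
  fix x
  show "x \<in> s ` {1..g+1} \<longleftrightarrow> x \<in> sigma n G"
  proof
    assume "x \<in> s ` {1..g+1}"
    then obtain i where i: "1 \<le> i" "i \<le> g+1" "x = s i" by auto
    consider "i = 1" | "2 \<le> i" "i \<le> \<alpha>+1" | "\<alpha>+2 \<le> i" using i by linarith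
    then show "x \<in> sigma n G"
    proof cases
      case 1 then show ?thesis using i by (simp add: sfun_def sigma_def)
    next
      case 2 then show ?thesis using i unfolding sigma_def sfun_def
        by (intro UnI1 UnI2) (rule CollectI, rule exI[of _ "i-1"], auto)
    next
      case 3 then show ?thesis using i alpha_ge1 unfolding sigma_def sfun_def
        by (intro UnI2) (rule CollectI, rule exI[of _ "i-1"], auto)
    qed
  next
    assume "x \<in> sigma n G"
    then consider "x = 1" | i where "1 \<le> i" "i \<le> \<alpha>" "x = L i + 1"
      | i where "\<alpha>+1 \<le> i" "i \<le> g" "x = L i + 2" unfolding sigma_def by blast
    then show "x \<in> s ` {1..g+1}"
    proof cases
      case 1 then show ?thesis by (intro image_eqI[of _ _ 1]) (auto simp: sfun_def)
    next
      case (2 i) then show ?thesis using alpha_lt by (intro image_eqI[of _ _ "i+1"]) (auto simp: sfun_def)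
    next
      case (3 i) then show ?thesis by (intro image_eqI[of _ _ "i+1"]) (auto simp: sfun_def)
    qed
  qed
qed

lemma sig_fin: "finite (sigma n G)" using s_img[symmetric] by simp
lemma sig_card: "card (sigma n G) = g+1" using ell_unique(1)[OF sig_fin s_smono s_img] .
lemma sig_ell: "1 \<le> i \<Longrightarrow> i \<le> g+1 \<Longrightarrow> ell (sigma n G) i = s i"
  using ell_unique(2)[OF sig_fin s_smono s_img] .

lemma s_diff: "1 \<le> i \<Longrightarrow> i \<le> g \<Longrightarrow> s (i+1) - s i \<le> 2*n+1 \<and> (s (i+1) - s i = 2*n+1 \<longleftrightarrow> i = \<alpha>+1)"
proof -
  assume i: "1 \<le> i" "i \<le> g"
  consider "i = 1" | "2 \<le> i" "i \<le> \<alpha>" | "i = \<alpha>+1" | "\<alpha>+2 \<le> i" using i by linarith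
  then show ?thesis
  proof cases
    case 1 then show ?thesis using alpha_ge1 L1 npos by (simp add: sfun_def)
  next
    case 2
    have "L (i-1+1) - L (i-1) \<le> 2*n" using diffs_le[of "i-1"] 2 alpha_lt by simp
    moreover have "s (i+1) = L i + 1" "s i = L (i-1) + 1" using 2 by (auto simp: sfun_def)
    ultimately show ?thesis using 2 by simp
  next
    case 3 then show ?thesis using alpha_gap' alpha_ge1 by (simp add: sfun_def)
  next
    case 4
    have "L (i-1+1) - L (i-1) < 2*n" using diffs_lt[of "i-1"] 4 i by simp
    moreover have "s (i+1) = L i + 2" "s i = L (i-1) + 2" using 4 by (auto simp: sfun_def)
    ultimately show ?thesis using 4 by simp
  qed
qed

lemma Lg_max: "Max G = L g"
proof -
  obtain j where j: "1 \<le> j" "j \<le> g" "L j = Max G" using in_L[OF Max_in[OF fin Gne]] by blast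
  have "L j \<le> L g" using L_le[of j g] j by simp
  moreover have "L g \<le> Max G" using Max_ge[OF fin L_in[of g]] cardG by simp
  ultimately show ?thesis using j by simp
qed

lemma s_last: "s (g+1) = L g + 2" using alpha_lt by (simp add: sfun_def)


lemma sig_bound: "x \<in> sigma n G \<Longrightarrow> 1 \<le> x \<and> x \<le> L g + 2"
proof -
  assume "x \<in> sigma n G"
  then have "x \<in> s ` {1..g+1}" using s_img by simp
  then obtain i where i: "1 \<le> i" "i \<le> g+1" "x = s i" by auto
  have "s 1 \<le> s i" using smono_le[OF s_smono, of 1 i] i by simp
  moreover have "s i \<le> s (g+1)" using smono_le[OF s_smono, of i "g+1"] i by simp
  ultimately show ?thesis using i s_last by (simp add: sfun_def)
qed

lemma sig_max: "Max (sigma n G) = L g + 2"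
proof (rule Max_eqI[OF sig_fin])
  show "L g + 2 \<in> sigma n G" using s_img s_last by force
qed (use sig_bound in auto)

lemma part1: "sigma n G \<in> Cset (2*n+1) (g+1)"
proof -
  have "L g \<le> 2*g - 1" using gs_max_bound[OF gs L_in[of g]] cardG by simp
  then have sub: "sigma n G \<subseteq> {1..2*(g+1)-1}"
  proof -
    assume h: "L g \<le> 2*g - 1"
    show ?thesis
    proof
      fix x assume "x \<in> sigma n G"
      then have "1 \<le> x \<and> x \<le> L g + 2" by (rule sig_bound)
      then show "x \<in> {1..2*(g+1)-1}" using h cardG by simp
    qed
  qed
  have "max_consec_diff_eq (2*n+1) (sigma n G)"
    unfolding max_consec_diff_eq_def sig_card
  proof (intro conjI)
    show "\<forall>i. 1 \<le> i \<and> i < g+1 \<longrightarrow> ell (sigma n G) (i+1) - ell (sigma n G) i \<le> 2*n+1"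
      using s_diff sig_ell by auto
    show "\<exists>i. 1 \<le> i \<and> i < g+1 \<and> ell (sigma n G) (i+1) - ell (sigma n G) i = 2*n+1"
      using s_diff[of "\<alpha>+1"] sig_ell[of "\<alpha>+1"] sig_ell[of "\<alpha>+2"] alpha_lt
      by (intro exI[of _ "\<alpha>+1"]) auto
  qed
  then show ?thesis using sub sig_card unfolding Cset_def by auto
qed

end


lemma sigma_inj:
  assumes A: "SG n G1" and B: "SG n G2" and eq: "sigma n G1 = sigma n G2"
  shows "G1 = G2"
proof -
  interpret A: SG n G1 by (rule A)
  interpret B: SG n G2 by (rule B)
  have cg: "card G1 = card G2" using A.cardG B.cardG by simp
  have seq: "sfun n G1 i = sfun n G2 i" if "1 \<le> i" "i \<le> card G1 + 1" for i
    using A.sig_ell[of i] B.sig_ell[of i] that eq cg by simp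
  have "sfun n G1 (sigma_alpha n G1 + 1 + 1) - sfun n G1 (sigma_alpha n G1 + 1) = 2*n+1"
    using A.s_diff[of "sigma_alpha n G1 + 1"] A.alpha_lt by simp
  then have "sfun n G2 (sigma_alpha n G1 + 1 + 1) - sfun n G2 (sigma_alpha n G1 + 1) = 2*n+1"
    using seq[of "sigma_alpha n G1 + 1"] seq[of "sigma_alpha n G1 + 1 + 1"] A.alpha_lt by simp
  then have aeq: "sigma_alpha n G1 = sigma_alpha n G2"
    using B.s_diff[of "sigma_alpha n G1 + 1"] A.alpha_lt cg by simp
  have Leq: "ell G1 i = ell G2 i" if "1 \<le> i" "i \<le> card G1" for i
    using seq[of "i+1"] that aeq by (simp add: sfun_def split: if_splits)
  have "G1 = ell G1 ` {1..card G1}" using A.L_img by simp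
  also have "\<dots> = ell G2 ` {1..card G2}" using Leq cg by (auto intro!: image_cong)
  also have "\<dots> = G2" using B.L_img .
  finally show ?thesis .
qed

context SG begin

abbreviation "m \<equiv> multiplicity G"

lemma m_notin: "m \<notin> G" using mult_props(2)[OF fin] .
lemma below_m: "1 \<le> x \<Longrightarrow> x < m \<Longrightarrow> x \<in> G" using mult_props(3)[OF fin] .
lemma m_ge2: "2 \<le> m"
proof -
  have "m \<noteq> 1" using m_notin one_in by auto
  then show ?thesis using mult_props(1)[OF fin] by linarith
qed

lemma L_id: "1 \<le> x \<Longrightarrow> x < m \<Longrightarrow> x \<le> g \<and> L x = x"
proof (induction x)
  case 0 then show ?case by simp
next
  case (Suc x)
  show ?case
  proof (cases "x = 0")
    case True then show ?thesis using L1 Gne fin by (simp add: Suc_leI card_gt_0_iff)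
  next
    case False
    then have IH: "x \<le> g" "L x = x" using Suc by auto
    have "Suc x \<in> G" using below_m Suc.prems by simp
    then obtain j where j: "1 \<le> j" "j \<le> g" "L j = Suc x" using in_L by blast
    have "x < j"
    proof (rule ccontr)
      assume "\<not> x < j"
      then have "L j \<le> L x" using L_le[of j x] j IH by simp
      then show False using j IH by simp
    qed
    then have "L (Suc x) \<le> L j" using L_le[of "Suc x" j] j by simp
    moreover have "L x < L (Suc x)" using L_strict[of x "Suc x"] False \<open>x < j\<close> j by simp
    ultimately show ?thesis using j IH \<open>x < j\<close> by simp
  qed
qed

lemma L_id': "1 \<le> x \<Longrightarrow> x < m \<Longrightarrow> L x = x" using L_id by blast

lemma alpha_ge_m: "m - 1 \<le> \<alpha>"
proof (rule ccontr)
  assume "\<not> m - 1 \<le> \<alpha>"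
  then have "L (\<alpha>+1) = \<alpha>+1" "L \<alpha> = \<alpha>" using L_id[of "\<alpha>+1"] L_id[of \<alpha>] alpha_ge1 by auto
  then show False using alpha_gap' npos by simp
qed

lemma twom_notin: "2*m \<notin> G"
  using gs_pair[OF gs, of "2*m" m] m_notin m_ge2 by auto

lemma sub_m: "z \<in> G \<Longrightarrow> m < z \<Longrightarrow> z - m \<in> G"
  using gs_pair[OF gs, of z m] m_notin m_ge2 by auto

lemma cond: "conductor G = L g + 1" using conductor_eq[OF fin Gne] Lg_max by simp

lemma sig_cases: "x \<in> sigma n G \<Longrightarrow> \<exists>i. 1 \<le> i \<and> i \<le> g+1 \<and> x = s i"
  using s_img by force

lemma upto_m: "{1..m} \<subseteq> sigma n G"
proof
  fix x assume x: "x \<in> {1..m}"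
  show "x \<in> sigma n G"
  proof (cases "x = 1")
    case True then show ?thesis by (simp add: sigma_def)
  next
    case False
    have "x \<le> \<alpha> + 1" using x alpha_ge_m by auto
    then have "s x = L (x-1) + 1" using False by (simp add: sfun_def)
    also have "\<dots> = x"
    proof -
      have "L (x-1) = x-1" by (rule L_id') (use x False in auto)
      then show ?thesis using x False by simp
    qed
    finally have "s x = x" .
    moreover have "x \<le> g+1"
    proof -
      have "x \<le> m" using x by simp
      then show ?thesis using alpha_ge_m alpha_lt by linarith
    qed
    ultimately show ?thesis using s_img x False by force
  qed
qed

lemma m1_notin: "m+1 \<notin> sigma n G"
proof
  assume "m+1 \<in> sigma n G"
  then obtain i where i: "1 \<le> i" "i \<le> g+1" "m+1 = s i" using sig_cases by blast
  consider "i = 1" | "2 \<le> i" "i \<le> \<alpha>+1" | "\<alpha>+2 \<le> i" using i by linarith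
  then show False
  proof cases
    case 1 then show ?thesis using i m_ge2 by (simp add: sfun_def)
  next
    case 2 then have "L (i-1) = m" using i by (simp add: sfun_def)
    moreover have "L (i-1) \<in> G" by (rule L_in) (use i 2 alpha_lt in linarith)+
    ultimately show ?thesis using m_notin by simp
  next
    case 3
    then have e: "L (i-1) + 2 = m + 1" using i by (simp add: sfun_def)
    have "L (m-1) < L (i-1)" using L_strict[of "m-1" "i-1"] 3 i alpha_ge_m m_ge2 by simp
    moreover have "L (m-1) = m-1" by (rule L_id') (use m_ge2 in linarith)+
    ultimately show ?thesis using e m_ge2 by linarith
  qed
qed

lemma twom2_notin:
  assumes Lg: "L g \<le> 3*m - 1"
  shows "2*m+2 \<notin> sigma n G"
proof
  assume "2*m+2 \<in> sigma n G"
  then obtain i where i: "1 \<le> i" "i \<le> g+1" "2*m+2 = s i" using sig_cases by blast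
  consider "i = 1" | "2 \<le> i" "i \<le> \<alpha>+1" | "\<alpha>+2 \<le> i" using i by linarith
  then show False
  proof cases
    case 1 then show ?thesis using i by (simp add: sfun_def)
  next
    case 3 then have "L (i-1) = 2*m" using i by (simp add: sfun_def)
    moreover have "L (i-1) \<in> G" by (rule L_in) (use i 3 in linarith)+
    ultimately show ?thesis using twom_notin by simp
  next
    case 2
    then have e: "L (i-1) = 2*m+1" using i by (simp add: sfun_def)
    define a where "a = L \<alpha>"
    define b where "b = L (\<alpha>+1)"
    have a_ge: "2*m+1 \<le> a" using L_le[of "i-1" \<alpha>] 2 e alpha_lt unfolding a_def by simp
    have b_eq: "b = a + 2*n" using alpha_gap' unfolding a_def b_def by simp
    have bG: "b \<in> G" and aG: "a \<in> G" using L_in alpha_ge1 alpha_lt unfolding a_def b_def by auto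
    have "b \<le> L g" using L_le[of "\<alpha>+1" g] alpha_lt unfolding b_def by simp
    then have b_le: "b \<le> 3*m - 1" using Lg by simp
    define k where "k = b - 2*m"
    have k1: "2*n+1 \<le> k" "k \<le> m - 1" "b = 2*m + k" using a_ge b_eq b_le unfolding k_def by auto
    have bmG: "m + k \<in> G" using sub_m[OF bG] k1 by simp
    have P: "m+u \<in> G \<or> m+k-u \<in> G" if "1 \<le> u" "u < k" for u
      using gs_pair[OF gs bG, of "m+u"] that k1 by (simp add: algebra_simps)
    have c2: "k div 2 \<le> card (G \<inter> {m+1..<m+k})" by (rule pair_count[OF fin P])
    have "n \<le> k div 2" using k1 by linarith
    define S1 where "S1 = {1..<m}"
    define S2 where "S2 = G \<inter> {m+1..<m+k}"
    define S3 where "S3 = {m+k, a, b}"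
    have cS1: "card S1 = m - 1" unfolding S1_def by simp
    have "m + k < a" "a < b" using a_ge b_eq npos k1 by auto
    then have cS3: "card S3 = 3" unfolding S3_def by simp
    have d12: "S1 \<inter> S2 = {}" unfolding S1_def S2_def by auto
    have d3: "(S1 \<union> S2) \<inter> S3 = {}" unfolding S1_def S2_def S3_def using a_ge b_eq k1 by auto
    have sub: "S1 \<union> S2 \<union> S3 \<subseteq> G" unfolding S1_def S2_def S3_def using below_m bmG aG bG by auto
    have f1: "finite S1" "finite S2" "finite S3" unfolding S1_def S2_def S3_def using fin by auto
    have "card (S1 \<union> S2 \<union> S3) = card (S1 \<union> S2) + card S3"
      by (rule card_Un_disjoint) (use f1 d3 in auto)
    also have "card (S1 \<union> S2) = card S1 + card S2"
      by (rule card_Un_disjoint) (use f1 d12 in auto)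
    finally have "card (S1 \<union> S2 \<union> S3) = card S1 + card S2 + card S3" .
    moreover have "card (S1 \<union> S2 \<union> S3) \<le> card G" using card_mono[OF fin sub] .
    ultimately show False using cS1 cS3 c2 \<open>n \<le> k div 2\<close> k1 cardG unfolding S2_def by linarith
  qed
qed

lemma divfact: "0 < (d::nat) \<Longrightarrow> d * (x div d) \<le> x \<and> x < d * (x div d) + d"
  by (metis add.commute add_less_cancel_left mod_less_divisor mult_div_mod_eq le_add2)

lemma depth2:
  assumes "depth G = 2"
  shows "m_set (m+1) (sigma n G) \<and> m_set_depth (m+1) (sigma n G) = 2"
proof -
  have dd: "(L g + m) div m = 2" using assms cond by (simp add: depth_def ceil_div_def)
  have h: "m * ((L g + m) div m) \<le> L g + m \<and> L g + m < m * ((L g + m) div m) + m"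
    by (rule divfact) (use m_ge2 in simp)
  have "m * 2 \<le> L g + m \<and> L g + m < m * 2 + m" using h unfolding dd .
  then have Lg: "m \<le> L g" "L g \<le> 2*m - 1" by auto
  have "L g \<noteq> m" using L_in[of g] m_notin cardG by auto
  with Lg have Lg2: "m+1 \<le> L g" by simp
  have mult: "(m+1)*k \<notin> sigma n G" if "1 \<le> k" for k
  proof (cases "k = 1")
    case True then show ?thesis using m1_notin by simp
  next
    case False
    then have "(m+1)*2 \<le> (m+1)*k" using that by (intro mult_le_mono2) linarith
    show ?thesis
    proof
      assume "(m+1)*k \<in> sigma n G"
      then have "(m+1)*k \<le> L g + 2" using sig_bound by blast
      with \<open>(m+1)*2 \<le> (m+1)*k\<close> have "(m+1)*2 \<le> L g + 2" by (rule order_trans)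
      then have "2*m+2 \<le> L g + 2" by (simp add: algebra_simps)
      then show False using Lg m_ge2 by linarith
    qed
  qed
  have ms: "m_set (m+1) (sigma n G)" unfolding m_set_def using upto_m mult sig_bound by auto
  have "m_set_depth (m+1) (sigma n G) = (L g + 2 + (m+1) - 1) div (m+1)"
    by (simp add: m_set_depth_def ceil_div_def sig_max)
  also have "\<dots> = 2" by (rule div_nat_eqI) (use Lg Lg2 in auto)
  finally show ?thesis using ms by simp
qed

lemma depth3:
  assumes "depth G = 3"
  shows "m_set (m+1) (sigma n G) \<and> m_set_depth (m+1) (sigma n G) = 3"
proof -
  have dd: "(L g + m) div m = 3" using assms cond by (simp add: depth_def ceil_div_def)
  have h: "m * ((L g + m) div m) \<le> L g + m \<and> L g + m < m * ((L g + m) div m) + m"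
    by (rule divfact) (use m_ge2 in simp)
  have "m * 3 \<le> L g + m \<and> L g + m < m * 3 + m" using h unfolding dd .
  then have Lg: "2*m \<le> L g" "L g \<le> 3*m - 1" by auto
  have "L g \<noteq> 2*m" using L_in[of g] twom_notin cardG by auto
  with Lg have Lg2: "2*m+1 \<le> L g" by simp
  have mult: "(m+1)*k \<notin> sigma n G" if "1 \<le> k" for k
  proof -
    have "k = 1 \<or> k = 2 \<or> 3 \<le> k" using \<open>1 \<le> k\<close> by linarith
    then consider "k = 1" | "k = 2" | "3 \<le> k" by blast
    then show ?thesis
    proof cases
      case 1 then show ?thesis using m1_notin by simp
    next
      case 2 then show ?thesis using twom2_notin[OF Lg(2)] by (simp add: algebra_simps)
    next
      case 3
      then have "(m+1)*3 \<le> (m+1)*k" by (intro mult_le_mono2)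
      show ?thesis
      proof
        assume "(m+1)*k \<in> sigma n G"
        then have "(m+1)*k \<le> L g + 2" using sig_bound by blast
        with \<open>(m+1)*3 \<le> (m+1)*k\<close> have "(m+1)*3 \<le> L g + 2" by (rule order_trans)
      then have "3*m+3 \<le> L g + 2" by (simp add: algebra_simps)
        then show False using Lg m_ge2 by linarith
      qed
    qed
  qed
  have ms: "m_set (m+1) (sigma n G)" unfolding m_set_def using upto_m mult sig_bound by auto
  have "m_set_depth (m+1) (sigma n G) = (L g + 2 + (m+1) - 1) div (m+1)"
    by (simp add: m_set_depth_def ceil_div_def sig_max)
  also have "\<dots> = 3" by (rule div_nat_eqI) (use Lg Lg2 in auto)
  finally show ?thesis using ms by simp
qed

end

theorem mainTheorem3:
  fixes n g :: nat
  assumes "0 < n" and "g = 3*n + 1"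
  shows "(\<forall>G \<in> sparse_gapsets_depth_le3 (2*n) g. sigma n G \<in> Cset (2*n+1) (g+1))
       \<and> inj_on (sigma n) (sparse_gapsets_depth_le3 (2*n) g)
       \<and> (\<forall>G \<in> sparse_gapsets (2*n) g. depth G = 2 \<longrightarrow>
            m_set (multiplicity G + 1) (sigma n G) \<and> m_set_depth (multiplicity G + 1) (sigma n G) = 2)
       \<and> (\<forall>G \<in> sparse_gapsets (2*n) g. depth G = 3 \<longrightarrow>
            m_set (multiplicity G + 1) (sigma n G) \<and> m_set_depth (multiplicity G + 1) (sigma n G) = 3)"
proof -
  have SGI: "SG n G" if "G \<in> sparse_gapsets (2*n) g" for G
    using that assms unfolding sparse_gapsets_def by unfold_locales auto
  have SGI': "SG n G" if "G \<in> sparse_gapsets_depth_le3 (2*n) g" for G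
    using that SGI unfolding sparse_gapsets_depth_le3_def by auto
  have 1: "\<forall>G \<in> sparse_gapsets_depth_le3 (2*n) g. sigma n G \<in> Cset (2*n+1) (g+1)"
  proof
    fix G assume "G \<in> sparse_gapsets_depth_le3 (2*n) g"
    then show "sigma n G \<in> Cset (2*n+1) (g+1)" using SG.part1[OF SGI'] SG.cardG[OF SGI'] assms by metis
  qed
  have 2: "inj_on (sigma n) (sparse_gapsets_depth_le3 (2*n) g)"
    unfolding inj_on_def using sigma_inj SGI' by blast
  have 3: "\<forall>G \<in> sparse_gapsets (2*n) g. depth G = 2 \<longrightarrow>
            m_set (multiplicity G + 1) (sigma n G) \<and> m_set_depth (multiplicity G + 1) (sigma n G) = 2"
    using SG.depth2[OF SGI] by blast
  have 4: "\<forall>G \<in> sparse_gapsets (2*n) g. depth G = 3 \<longrightarrow>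
            m_set (multiplicity G + 1) (sigma n G) \<and> m_set_depth (multiplicity G + 1) (sigma n G) = 3"
    using SG.depth3[OF SGI] by blast
  show ?thesis using 1 2 3 4 by blast
qed

end
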